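(* Let $w_1,\dots,w_k\in\mathbb{R}^n$ be unit vectors, $f(x)=\bigwedge_{i=1}^k\mathrm{sign}(w_i\cdot x)$, and $\rho>0$. Let $\mathbf{P},\mathbf{N}$ be finite subsets of the unit sphere $\mathbb{S}^{n-1}$ with $f(x)=1$ for all $x\in\mathbf{P}$, and let \[\mathcal{H}=\{w\in\mathbb{R}^{n+1}:\|w\|_2\le1,\ w\cdot(x,1)\ge0\ \forall x\in\mathbf{P},\ w\cdot(x,1)\le0\ \forall x\in\mathbf{N}\}.\] If $w_1\cdot x<-\rho$ for all $x\in\mathbf{N}$, then \[|\mathcal{H}|\ge\left(\frac{\rho}{3(1+\rho)}\right)^{n+1}|B_2^n|,\] where $|\cdot|$ denotes Lebesgue volume (in the respective dimension) and $B_2^n=\{w\in\mathbb{R}^n:\|w\|_2\le1\}$. Moreover, $\mathcal{H}$ contains a ball of radius $\frac{\rho}{6(1+\rho)}$.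
   Context: $f(x)=1$ iff $w_i\cdot x>0$ for all $i\in[k]$, and $f(x)=-1$ otherwise. *)

theory Defs
  imports "HOL-Analysis.Analysis"
begin

definition halfspace_intersection :: "(nat \<Rightarrow> 'a::real_inner) \<Rightarrow> nat \<Rightarrow> 'a \<Rightarrow> int" where
  "halfspace_intersection w k x = (if (\<forall>i\<in>{1..k}. w i \<bullet> x > 0) then 1 else -1)"

text \<open>The version space H in R^{n+1}, with R^{n+1} represented as 'a \<times> real;
  w . (x,1) is the inner product on the product type.\<close>
definition version_space :: "'a::euclidean_space set \<Rightarrow> 'a set \<Rightarrow> ('a \<times> real) set" where
  "version_space P N = {w. norm w \<le> 1 \<and> (\<forall>x\<in>P. w \<bullet> (x, 1) \<ge> 0) \<and> (\<forall>x\<in>N. w \<bullet> (x, 1) \<le> 0)}"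

end

theory Submission
  imports Defs
begin

theorem lemma3p3:
  fixes w :: "nat \<Rightarrow> 'a::euclidean_space" and k :: nat and \<rho> :: real
    and P N :: "'a set"
  assumes "k \<ge> 1"
    and "\<forall>i\<in>{1..k}. norm (w i) = 1"
    and "\<rho> > 0"
    and "finite P" and "P \<subseteq> sphere 0 1"
    and "finite N" and "N \<subseteq> sphere 0 1"
    and "\<forall>x\<in>P. halfspace_intersection w k x = 1"
    and "\<forall>x\<in>N. w 1 \<bullet> x < - \<rho>"
  shows "measure lborel (version_space P N)
           \<ge> (\<rho> / (3 * (1 + \<rho>))) ^ (DIM('a) + 1) * measure lborel (cball (0::'a) 1)
         \<and> (\<exists>c. cball c (\<rho> / (6 * (1 + \<rho>))) \<subseteq> version_space P N)"
proof -
  define q where "q = \<rho> / (3 * (1 + \<rho>))"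
  define s where "s = 1 / (1 + \<rho>)"
  define a where "a = s *\<^sub>R w 1"
  define t0 where "t0 = s * \<rho> / 2"
  define C where "C = cball a q \<times> {t0 - q/2 .. t0 + q/2}"
  have rho: "\<rho> > 0" using assms by simp
  have rho1: "1 + \<rho> \<noteq> 0" using rho by simp
  have qpos: "q > 0" unfolding q_def using rho by simp
  have spos: "s > 0" unfolding s_def using rho by simp
  have w1: "norm (w 1) = 1" using assms(1,2) by auto
  have na: "norm a = s" unfolding a_def using w1 spos by simp
  have e1: "t0 = 3 * q / 2" unfolding t0_def q_def s_def using rho rho1 by (simp add: field_simps)
  have e2: "s * \<rho> = 3 * q" unfolding q_def s_def using rho rho1 by (simp add: field_simps)
  have q3: "3 * q = \<rho> / (1 + \<rho>)" 
  proof -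
    have "q = (\<rho> / (1 + \<rho>)) / 3" unfolding q_def by (simp add: divide_divide_eq_left mult.commute)
    moreover have "\<And>X::real. 3 * (X / 3) = X" by simp
    ultimately show ?thesis by metis
  qed
  have e3': "s + 3 * q = 1" unfolding q3 s_def using rho1 by (simp add: add_divide_distrib[symmetric])
  have e3: "s + q + t0 + q / 2 = 1" using e1 e3' by simp
  have wP: "w 1 \<bullet> x > 0" if "x \<in> P" for x
    using assms(1,8) that unfolding halfspace_intersection_def
    by (metis atLeastAtMost_iff le_refl one_neq_neg_one)
  have key: "\<bar>(y - a) \<bullet> x\<bar> \<le> q" if "y \<in> cball a q" "norm x = 1" for y x
  proof -
    have "\<bar>(y - a) \<bullet> x\<bar> \<le> norm (y - a) * norm x" by (rule Cauchy_Schwarz_ineq2)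
    also have "\<dots> \<le> q" using that by (simp add: dist_norm norm_minus_commute)
    finally show ?thesis .
  qed
  have CH: "C \<subseteq> version_space P N"
  proof
    fix z assume "z \<in> C"
    then obtain y t where z: "z = (y, t)" and y: "y \<in> cball a q" and t: "t0 - q/2 \<le> t" "t \<le> t0 + q/2"
      unfolding C_def by auto
    have ny: "norm y \<le> s + q"
    proof -
      have "norm y \<le> norm a + norm (y - a)" by (metis add_diff_cancel_left' norm_triangle_ineq diff_add_cancel)
      thus ?thesis using y na by (simp add: dist_norm norm_minus_commute)
    qed
    have "norm z \<le> norm y + norm t" unfolding z by (rule norm_Pair_le)
    also have "\<dots> \<le> 1" using ny t e1 e3 qpos by auto
    finally have nz: "norm z \<le> 1" .
    have yx: "y \<bullet> x = s * (w 1 \<bullet> x) + (y - a) \<bullet> x" for x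
      unfolding a_def by (simp add: inner_diff_left)
    have Pz: "z \<bullet> (x, 1) \<ge> 0" if "x \<in> P" for x
    proof -
      have nx: "norm x = 1" using that assms(5) by auto
      have "s * (w 1 \<bullet> x) \<ge> 0" using wP[OF that] spos by simp
      thus ?thesis unfolding z using key[OF y nx] yx[of x] t e1 by simp
    qed
    have Nz: "z \<bullet> (x, 1) \<le> 0" if "x \<in> N" for x
    proof -
      have nx: "norm x = 1" using that assms(7) by auto
      have "s * (w 1 \<bullet> x) \<le> s * (- \<rho>)" using assms(9) that spos by (intro mult_left_mono) (auto simp: less_imp_le)
      thus ?thesis unfolding z using key[OF y nx] yx[of x] t e1 e2 by simp
    qed
    show "z \<in> version_space P N" unfolding version_space_def using nz Pz Nz by auto
  qed
  have ball: "cball (a, t0) (\<rho> / (6 * (1 + \<rho>))) \<subseteq> C"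
  proof
    fix z assume zb: "z \<in> cball (a, t0) (\<rho> / (6 * (1 + \<rho>)))"
    have r: "\<rho> / (6 * (1 + \<rho>)) = q / 2" unfolding q_def by simp
    obtain y t where z: "z = (y, t)" by (cases z)
    have d: "dist (a, t0) (y, t) \<le> q / 2" using zb unfolding r z by simp
    have "dist a y \<le> q" using dist_fst_le[of "(a,t0)" "(y,t)"] d qpos by simp
    moreover have "dist t0 t \<le> q / 2" using dist_snd_le[of "(a,t0)" "(y,t)"] d by simp
    moreover have "\<bar>t0 - t\<bar> \<le> q / 2 \<Longrightarrow> t0 - q/2 \<le> t \<and> t \<le> t0 + q/2" by linarith
    ultimately show "z \<in> C" unfolding C_def z dist_real_def by (auto simp: dist_commute)
  qed
  have closedH: "closed (version_space P N)"
  proof -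
    have "version_space P N = cball 0 1 \<inter> (\<Inter>x\<in>P. {z. 0 \<le> z \<bullet> (x, 1)}) \<inter> (\<Inter>x\<in>N. {z. z \<bullet> (x, 1) \<le> 0})"
      unfolding version_space_def by auto
    moreover have "closed {z::'a\<times>real. 0 \<le> z \<bullet> c}" for c
      by (intro closed_Collect_le continuous_intros)
    moreover have "closed {z::'a\<times>real. z \<bullet> c \<le> 0}" for c
      by (intro closed_Collect_le continuous_intros)
    ultimately show ?thesis by (auto intro!: closed_Int closed_INT)
  qed
  have boundedH: "bounded (version_space P N)"
    by (rule bounded_subset[OF bounded_cball[of 0 1]]) (auto simp: version_space_def)
  have Hfm: "version_space P N \<in> fmeasurable lborel"
    using closedH boundedH by (intro fmeasurable_compact) (simp add: compact_eq_bounded_closed)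
  have Cs: "C \<in> sets lborel" unfolding C_def sets_lborel by (intro borel_closed closed_Times) auto
  have "emeasure lborel C = emeasure (lborel \<Otimes>\<^sub>M lborel) C" by (simp add: lborel_prod)
  also have "\<dots> = emeasure lborel (cball a q) * emeasure lborel {t0 - q/2 .. t0 + q/2}"
    unfolding C_def by (intro sigma_finite_measure.emeasure_pair_measure_Times[OF sigma_finite_lborel]) auto
  also have "\<dots> = ennreal (unit_ball_vol (DIM('a)) * q ^ DIM('a)) * ennreal q"
    using qpos by (simp add: emeasure_cball)
  finally have "measure lborel C = unit_ball_vol (DIM('a)) * q ^ DIM('a) * q"
    unfolding measure_def using qpos by (simp add: ennreal_mult'[symmetric])
  moreover have "measure lborel (cball (0::'a) 1) = unit_ball_vol (DIM('a))"
    unfolding measure_def by (simp add: emeasure_cball)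
  moreover have "measure lborel C \<le> measure lborel (version_space P N)"
    by (rule measure_mono_fmeasurable[OF CH Cs Hfm])
  ultimately have "q ^ (DIM('a) + 1) * measure lborel (cball (0::'a) 1) \<le> measure lborel (version_space P N)"
    by (simp add: algebra_simps)
  then show ?thesis unfolding q_def using ball CH by blast
qed

end
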